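(* Let $n\ge2$, $R_0>0$, $X\subset\mathbb R^n$, $U:=\{x\in\mathbb R^n:\operatorname{dist}(x,X)\le R_0\}$. Let $N\ge2$ be an integer, $0<R\le3^{1-N}R_0$, and $B_j=\overline B_R(x_j)$, $1\le j\le N$, closed balls with $x_j\in X$. For $x\in X$, $0<r\le R_0$, set $J(x,r):=\{j:B_j\subset B_r(x)\}$. Let $\Phi:\mathbb R_+\to\mathbb R_+$ be superadditive and $\lambda_1,\dots,\lambda_N\ge0$. Set $$b:=\min_{i\ne j}[\Phi(\lambda_i+\lambda_j)-\Phi(\lambda_i)-\Phi(\lambda_j)]\ge0,\quad \mathbf m:=\frac12\min_{i\ne j}|x_i-x_j|,\quad\rho:=\max(R,\mathbf m).$$ Suppose $h\ge0$ is a Borel function on $U\setminus\bigcup_jB_j$ such that for all $x\in X$ and $0<r\le R_0$: if $S_r(x)\cap B_j=\emptyset$ for all $j$, then $\int_{S_r(x)}h\ge\frac1r\Phi\big(\sum_{j\in J(x,r)}\lambda_j\big)$. Then $$\int_{U\setminus\bigcup_jB_j}h\ge\left(\ln\frac{R_0}{3^{N-1}R}\right)\sum_j\Phi(\lambda_j)+b\ln\frac{R_0}{3^{N-1}\rho}.$$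
   Context: $B_r(x)$ is the open ball and $S_r(x)$ the sphere of radius $r$ centered at $x$, with surface measure. $\Phi$ superadditive means $\Phi(s+t)\ge\Phi(s)+\Phi(t)$ for all $s,t\ge0$. *)

theory Defs
  imports "HOL-Analysis.Analysis"
begin

text \<open>Integral of a nonnegative function over the sphere S_r(x) with respect to the
(n-1)-dimensional surface measure, n = DIM('a).  The library has no surface measure, so
we use the standard cone-measure (polar coordinates) definition:
  integral over S_r(x) of h = n r^(n-1) * integral over the unit ball B_1(0) of h(x + r y/|y|) dy.\<close>
definition sphere_nn_integral :: "('a::euclidean_space \<Rightarrow> real) \<Rightarrow> 'a \<Rightarrow> real \<Rightarrow> ennreal" where
  "sphere_nn_integral h x r =
     ennreal (real DIM('a) * r ^ (DIM('a) - 1)) *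
     (\<integral>\<^sup>+ y. ennreal (h (x + (r / norm y) *\<^sub>R y)) * indicator (ball 0 1) y \<partial>lborel)"

definition superadditive :: "(real \<Rightarrow> real) \<Rightarrow> bool" where
  "superadditive \<Phi> \<longleftrightarrow> (\<forall>s t. 0 \<le> s \<longrightarrow> 0 \<le> t \<longrightarrow> \<Phi> (s + t) \<ge> \<Phi> s + \<Phi> t)"

end

theory Submission
  imports Defs
begin


lemma scale_real:
  fixes f :: "real \<Rightarrow> ennreal" and c :: real
  assumes [measurable]: "f \<in> borel_measurable borel" and c: "c > 0"
  shows "(\<integral>\<^sup>+r. f r \<partial>lborel) = ennreal c * (\<integral>\<^sup>+u. f (c * u) \<partial>lborel)"
  using nn_integral_real_affine[of f c 0] c by simp

definition pw1 :: "nat \<Rightarrow> real \<Rightarrow> 'a::euclidean_space \<Rightarrow> real" where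
  "pw1 n r y = (if 0 < r \<and> norm y < 1 then real n * r^(n-1) else 0)"
definition pw2 :: "nat \<Rightarrow> real \<Rightarrow> 'a::euclidean_space \<Rightarrow> real" where
  "pw2 n u y = (if 0 < u \<and> norm y < 1 then real n * u^(n-1) * norm y ^ n else 0)"

lemma pw1_nonneg[simp]: "0 \<le> pw1 n r y" by (simp add: pw1_def)
lemma pw2_nonneg[simp]: "0 \<le> pw2 n r y" by (simp add: pw2_def)

lemma step2:
  fixes F :: "'a::euclidean_space \<Rightarrow> ennreal" and y :: 'a
  assumes Fm[measurable]: "F \<in> borel_measurable borel" and y: "y \<noteq> 0" and n1: "n \<ge> 1"
  shows "(\<integral>\<^sup>+ r. F ((r / norm y) *\<^sub>R y) * ennreal (pw1 n r y) \<partial>lborel)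
           = (\<integral>\<^sup>+ u. F (u *\<^sub>R y) * ennreal (pw2 n u y) \<partial>lborel)"
proof -
  have c: "norm y > 0" using y by simp
  have [measurable]: "(\<lambda>r. pw1 n r y) \<in> borel_measurable borel" unfolding pw1_def by measurable
  have "(\<integral>\<^sup>+ r. F ((r / norm y) *\<^sub>R y) * ennreal (pw1 n r y) \<partial>lborel)
      = ennreal (norm y) * (\<integral>\<^sup>+ u. F ((norm y * u / norm y) *\<^sub>R y) * ennreal (pw1 n (norm y * u) y) \<partial>lborel)"
    by (rule scale_real[OF _ c]) measurable
  also have "\<dots> = (\<integral>\<^sup>+ u. ennreal (norm y) * (F ((norm y * u / norm y) *\<^sub>R y) * ennreal (pw1 n (norm y * u) y)) \<partial>lborel)"
    by (rule nn_integral_cmult[symmetric]) measurable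
  also have "\<dots> = (\<integral>\<^sup>+ u. F (u *\<^sub>R y) * ennreal (pw2 n u y) \<partial>lborel)"
  proof (rule nn_integral_cong)
    fix u :: real
    have e1: "norm y * u / norm y = u" using c by simp
    have sn: "Suc (n-1) = n" using n1 by simp
    have e2: "norm y * pw1 n (norm y * u) y = pw2 n u y"
    proof (cases "0 < u \<and> norm y < 1")
      case True
      have "norm y * (real n * (norm y * u)^(n-1)) = real n * u^(n-1) * (norm y * norm y^(n-1))"
        by (simp add: power_mult_distrib)
      also have "norm y * norm y^(n-1) = norm y ^ n" by (metis sn power_Suc)
      finally show ?thesis using True c by (simp add: pw1_def pw2_def)
    next
      case False
      then show ?thesis using c by (auto simp: pw1_def pw2_def zero_less_mult_iff)
    qed
    have "ennreal (norm y) * (F ((norm y * u / norm y) *\<^sub>R y) * ennreal (pw1 n (norm y * u) y))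
        = F (u *\<^sub>R y) * (ennreal (norm y) * ennreal (pw1 n (norm y * u) y))"
      by (subst e1) (simp add: ac_simps)
    also have "ennreal (norm y) * ennreal (pw1 n (norm y * u) y) = ennreal (pw2 n u y)"
      by (subst ennreal_mult''[symmetric]) (simp_all add: e2)
    finally show "ennreal (norm y) * (F ((norm y * u / norm y) *\<^sub>R y) * ennreal (pw1 n (norm y * u) y))
        = F (u *\<^sub>R y) * ennreal (pw2 n u y)" .
  qed
  finally show ?thesis .
qed

definition pw3 :: "nat \<Rightarrow> real \<Rightarrow> 'a::euclidean_space \<Rightarrow> real" where
  "pw3 n u z = (if 0 < u \<and> norm z < u then real n * norm z ^ n / u^(n+1) else 0)"
lemma pw3_nonneg[simp]: "0 \<le> pw3 n r y" by (simp add: pw3_def)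

lemma scale_eucl:
  fixes G :: "'a::euclidean_space \<Rightarrow> ennreal" and c :: real
  assumes [measurable]: "G \<in> borel_measurable borel" and c: "c > 0"
  shows "(\<integral>\<^sup>+z. G z \<partial>lborel) = ennreal (c ^ DIM('a)) * (\<integral>\<^sup>+y. G (c *\<^sub>R y) \<partial>lborel)"
proof -
  have eq: "(lborel::'a measure) = density (distr lborel borel (\<lambda>x. 0 + c *\<^sub>R x)) (\<lambda>_. \<bar>c\<bar>^DIM('a))"
    using c by (intro lborel_affine) simp
  have "(\<integral>\<^sup>+z. G z \<partial>lborel) = (\<integral>\<^sup>+z. G z \<partial>(density (distr lborel borel (\<lambda>x. 0 + c *\<^sub>R x)) (\<lambda>_. \<bar>c\<bar>^DIM('a))))"
    by (rule arg_cong[where f="\<lambda>M. integral\<^sup>N M G"], rule eq)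
  also have "\<dots> = (\<integral>\<^sup>+y. ennreal (\<bar>c\<bar>^DIM('a)) * G (c *\<^sub>R y) \<partial>lborel)"
    by (simp add: nn_integral_density nn_integral_distr)
  also have "\<dots> = ennreal (c ^ DIM('a)) * (\<integral>\<^sup>+y. G (c *\<^sub>R y) \<partial>lborel)"
    using c by (simp add: nn_integral_cmult)
  finally show ?thesis .
qed

lemma step4:
  fixes F :: "'a::euclidean_space \<Rightarrow> ennreal" and u :: real
  assumes Fm[measurable]: "F \<in> borel_measurable borel"
  shows "(\<integral>\<^sup>+ y. F (u *\<^sub>R y) * ennreal (pw2 DIM('a) u y) \<partial>lborel) = (\<integral>\<^sup>+ z. F z * ennreal (pw3 DIM('a) u z) \<partial>lborel)"
proof (cases "u > 0")
  case False
  then show ?thesis by (simp add: pw2_def pw3_def)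
next
  case True
  let ?n = "DIM('a)"
  have n1: "?n \<ge> 1" using DIM_positive[where 'a='a] by linarith
  have [measurable]: "(\<lambda>z. pw3 ?n u z) \<in> borel_measurable borel" unfolding pw3_def by measurable
  have "(\<integral>\<^sup>+ z. F z * ennreal (pw3 ?n u z) \<partial>lborel)
      = ennreal (u ^ ?n) * (\<integral>\<^sup>+ y. F (u *\<^sub>R y) * ennreal (pw3 ?n u (u *\<^sub>R y)) \<partial>lborel)"
    by (rule scale_eucl[OF _ True]) measurable
  also have "\<dots> = (\<integral>\<^sup>+ y. ennreal (u ^ ?n) * (F (u *\<^sub>R y) * ennreal (pw3 ?n u (u *\<^sub>R y))) \<partial>lborel)"
    by (rule nn_integral_cmult[symmetric]) measurable
  also have "\<dots> = (\<integral>\<^sup>+ y. F (u *\<^sub>R y) * ennreal (pw2 ?n u y) \<partial>lborel)"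
  proof (rule nn_integral_cong)
    fix y :: 'a
    have nn: "?n + ?n = (?n+1) + (?n-1)" using n1 by simp
    have e: "u^?n * u^?n = u^(?n+1) * u^(?n-1)" by (metis nn power_add)
    have e2: "u ^ ?n * pw3 ?n u (u *\<^sub>R y) = pw2 ?n u y"
    proof (cases "norm y < 1")
      case True
      have "u ^ ?n * (real ?n * (u * norm y) ^ ?n / u ^ (?n + 1)) = real ?n * norm y ^ ?n * (u^?n * u^?n / u^(?n+1))"
        by (simp add: power_mult_distrib)
      also have "u^?n * u^?n / u^(?n+1) = u^(?n-1)" using \<open>u>0\<close> by (simp add: e)
      finally show ?thesis using True \<open>u>0\<close> by (simp add: pw2_def pw3_def mult_less_cancel_left_pos abs_of_pos)
    next
      case False
      then show ?thesis using \<open>u>0\<close> by (simp add: pw2_def pw3_def mult_less_cancel_left_pos abs_of_pos)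
    qed
    have "ennreal (u ^ ?n) * (F (u *\<^sub>R y) * ennreal (pw3 ?n u (u *\<^sub>R y)))
        = F (u *\<^sub>R y) * (ennreal (u ^ ?n) * ennreal (pw3 ?n u (u *\<^sub>R y)))" by (simp add: ac_simps)
    also have "ennreal (u ^ ?n) * ennreal (pw3 ?n u (u *\<^sub>R y)) = ennreal (pw2 ?n u y)"
      by (subst ennreal_mult''[symmetric]) (simp_all add: e2)
    finally show "ennreal (u ^ ?n) * (F (u *\<^sub>R y) * ennreal (pw3 ?n u (u *\<^sub>R y))) = F (u *\<^sub>R y) * ennreal (pw2 ?n u y)" .
  qed
  finally show ?thesis by simp
qed

lemma tail_int:
  fixes a :: real and n :: nat
  assumes a: "a > 0" and n: "n \<noteq> 0"
  shows "(\<integral>\<^sup>+u. ennreal (real n * a ^ n / u ^ (n+1)) * indicator {a..} u \<partial>lborel) = 1"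
proof -
  have "(\<integral>\<^sup>+u. ennreal (real n * a ^ n / u ^ (n+1)) * indicator {a..} u \<partial>lborel) = 0 - (- (a^n) / a^n)"
  proof (rule nn_integral_FTC_atLeast[where F="\<lambda>u. - (a^n) / u^n"])
    show "(\<lambda>u. real n * a ^ n / u ^ (n + 1)) \<in> borel_measurable borel" by measurable
    fix x assume x: "a \<le> x"
    then have x0: "x > 0" using a by simp
    have nn: "n + n = (n+1) + (n-1)" using n by simp
    have e: "x^n * x^n = x^(n+1) * x^(n-1)" by (metis nn power_add)
    have "((\<lambda>u. - (a ^ n) / u ^ n) has_real_derivative (0 * x^n - (- (a^n)) * (real n * x ^ (n - Suc 0))) / (x^n * x^n)) (at x)"
      by (rule DERIV_divide[OF DERIV_const DERIV_pow]) (use x0 in simp)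
    moreover have "(0 * x^n - (- (a^n)) * (real n * x ^ (n - Suc 0))) / (x^n * x^n) = real n * a ^ n / x ^ (n + 1)"
      using x0 by (simp add: e)
    ultimately show "((\<lambda>u. - (a ^ n) / u ^ n) has_real_derivative real n * a ^ n / x ^ (n + 1)) (at x)" by simp
    show "0 \<le> real n * a ^ n / x ^ (n + 1)" using x0 a by simp
  next
    have "((\<lambda>u. (- (a ^ n)) * inverse (u ^ n)) \<longlongrightarrow> (- (a^n)) * 0) at_top"
      by (intro tendsto_mult tendsto_const tendsto_inverse_0_at_top filterlim_pow_at_top filterlim_ident) (use n in simp)
    then show "((\<lambda>u. - (a ^ n) / u ^ n) \<longlongrightarrow> 0) at_top" by (simp add: divide_inverse)
  qed
  then show ?thesis using a by simp
qed

lemma step6: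
  fixes F :: "'a::euclidean_space \<Rightarrow> ennreal" and z :: 'a
  assumes z: "z \<noteq> 0"
  shows "(\<integral>\<^sup>+ u. F z * ennreal (pw3 DIM('a) u z) \<partial>lborel) \<le> F z"
proof -
  have a: "norm z > 0" using z by simp
  have [measurable]: "(\<lambda>u. pw3 DIM('a) u z) \<in> borel_measurable borel" unfolding pw3_def by measurable
  have "(\<integral>\<^sup>+ u. F z * ennreal (pw3 DIM('a) u z) \<partial>lborel) = F z * (\<integral>\<^sup>+ u. ennreal (pw3 DIM('a) u z) \<partial>lborel)"
    by (rule nn_integral_cmult) measurable
  also have "(\<integral>\<^sup>+ u. ennreal (pw3 DIM('a) u z) \<partial>lborel) \<le> (\<integral>\<^sup>+u. ennreal (real DIM('a) * norm z ^ DIM('a) / u ^ (DIM('a)+1)) * indicator {norm z..} u \<partial>lborel)"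
    by (rule nn_integral_mono) (auto simp: pw3_def indicator_def)
  also have "\<dots> = 1" by (rule tail_int[OF a]) simp
  finally show ?thesis by (simp add: mult_left_mono)
qed

lemma polar_le:
  fixes F :: "'a::euclidean_space \<Rightarrow> ennreal"
  assumes Fm[measurable]: "F \<in> borel_measurable borel"
  shows "(\<integral>\<^sup>+ r. ennreal (if 0 < r then real DIM('a) * r^(DIM('a)-1) else 0) *
            (\<integral>\<^sup>+ y. F ((r / norm y) *\<^sub>R y) * indicator (ball 0 1) y \<partial>lborel) \<partial>lborel)
         \<le> (\<integral>\<^sup>+ z. F z \<partial>lborel)"
proof -
  let ?n = "DIM('a)"
  have [measurable]: "(\<lambda>(r,y). pw1 ?n r (y::'a)) \<in> borel_measurable (lborel \<Otimes>\<^sub>M lborel)" unfolding pw1_def by measurable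
  have [measurable]: "(\<lambda>(r,y). pw2 ?n r (y::'a)) \<in> borel_measurable (lborel \<Otimes>\<^sub>M lborel)" unfolding pw2_def by measurable
  have [measurable]: "(\<lambda>(r,y). pw3 ?n r (y::'a)) \<in> borel_measurable (lborel \<Otimes>\<^sub>M lborel)" unfolding pw3_def by measurable
  have [measurable]: "(\<lambda>(y,r). pw3 ?n r (y::'a)) \<in> borel_measurable (lborel \<Otimes>\<^sub>M lborel)" unfolding pw3_def by measurable
  have [measurable]: "ball (0::'a) 1 \<in> sets borel" by simp
  have n1: "?n \<ge> 1" using DIM_positive[where 'a='a] by linarith
  interpret P: pair_sigma_finite "lborel::real measure" "lborel::'a measure"
    by (simp add: pair_sigma_finite_def lborel.sigma_finite_measure_axioms)
  interpret P2: pair_sigma_finite "lborel::'a measure" "lborel::real measure"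
    by (simp add: pair_sigma_finite_def lborel.sigma_finite_measure_axioms)
  have "(\<integral>\<^sup>+ r. ennreal (if 0 < r then real DIM('a) * r^(DIM('a)-1) else 0) *
            (\<integral>\<^sup>+ y. F ((r / norm y) *\<^sub>R y) * indicator (ball 0 1) y \<partial>lborel) \<partial>lborel)
       = (\<integral>\<^sup>+ r. (\<integral>\<^sup>+ y. F ((r / norm y) *\<^sub>R y) * ennreal (pw1 ?n r y) \<partial>lborel) \<partial>lborel)"
  proof (rule nn_integral_cong)
    fix r :: real
    have "ennreal (if 0 < r then real DIM('a) * r^(DIM('a)-1) else 0) *
            (\<integral>\<^sup>+ y. F ((r / norm y) *\<^sub>R y) * indicator (ball 0 1) y \<partial>lborel)
        = (\<integral>\<^sup>+ y. ennreal (if 0 < r then real DIM('a) * r^(DIM('a)-1) else 0) *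
            (F ((r / norm y) *\<^sub>R y) * indicator (ball 0 1) y) \<partial>lborel)"
      by (rule nn_integral_cmult[symmetric]) measurable
    also have "\<dots> = (\<integral>\<^sup>+ y. F ((r / norm y) *\<^sub>R y) * ennreal (pw1 ?n r y) \<partial>lborel)"
      by (rule nn_integral_cong) (auto simp: pw1_def indicator_def mult.commute)
    finally show "ennreal (if 0 < r then real DIM('a) * r^(DIM('a)-1) else 0) *
            (\<integral>\<^sup>+ y. F ((r / norm y) *\<^sub>R y) * indicator (ball 0 1) y \<partial>lborel)
        = (\<integral>\<^sup>+ y. F ((r / norm y) *\<^sub>R y) * ennreal (pw1 ?n r y) \<partial>lborel)" .
  qed
  also have "\<dots> = (\<integral>\<^sup>+ y. (\<integral>\<^sup>+ r. F ((r / norm y) *\<^sub>R y) * ennreal (pw1 ?n r y) \<partial>lborel) \<partial>lborel)"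
    by (rule lborel_pair.Fubini'[symmetric]) measurable
  also have "\<dots> = (\<integral>\<^sup>+ y. (\<integral>\<^sup>+ u. F (u *\<^sub>R y) * ennreal (pw2 ?n u y) \<partial>lborel) \<partial>lborel)"
  proof (rule nn_integral_cong_AE)
    show "AE y in lborel. (\<integral>\<^sup>+ r. F ((r / norm y) *\<^sub>R y) * ennreal (pw1 ?n r y) \<partial>lborel)
           = (\<integral>\<^sup>+ u. F (u *\<^sub>R y) * ennreal (pw2 ?n u y) \<partial>lborel)"
      using AE_lborel_singleton[of "0::'a"]
      by eventually_elim (rule step2[OF Fm _ n1])
  qed
  also have "\<dots> = (\<integral>\<^sup>+ u. (\<integral>\<^sup>+ y. F (u *\<^sub>R y) * ennreal (pw2 ?n u y) \<partial>lborel) \<partial>lborel)"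
    by (rule lborel_pair.Fubini') measurable
  also have "\<dots> = (\<integral>\<^sup>+ u. (\<integral>\<^sup>+ z. F z * ennreal (pw3 ?n u z) \<partial>lborel) \<partial>lborel)"
    by (rule nn_integral_cong) (rule step4[OF Fm])
  also have "\<dots> = (\<integral>\<^sup>+ z. (\<integral>\<^sup>+ u. F z * ennreal (pw3 ?n u z) \<partial>lborel) \<partial>lborel)"
    by (rule lborel_pair.Fubini') measurable
  also have "\<dots> \<le> (\<integral>\<^sup>+ z. F z \<partial>lborel)"
  proof (rule nn_integral_mono_AE)
    show "AE z in lborel. (\<integral>\<^sup>+ u. F z * ennreal (pw3 ?n u z) \<partial>lborel) \<le> F z"
      using AE_lborel_singleton[of "0::'a"]
      by eventually_elim (rule step6)
  qed
  finally show ?thesis .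
qed
lemma log_int:
  fixes s t c :: real
  assumes s: "0 < s" "s \<le> t" and c: "c \<ge> 0"
  shows "(\<integral>\<^sup>+ r. indicator {s<..<t} r * ennreal (c / r) \<partial>lborel) = ennreal (c * ln (t / s))"
proof -
  have "((\<lambda>r. c / r) has_integral (c * ln t - c * ln s)) {s..t}"
  proof (rule fundamental_theorem_of_calculus[where f="\<lambda>r. c * ln r"])
    show "s \<le> t" by fact
    fix x assume "x \<in> {s..t}"
    then have "x > 0" using s by simp
    then have "((\<lambda>r. c * ln r) has_real_derivative c * (1 / x)) (at x within {s..t})"
      by (auto intro!: derivative_eq_intros)
    then show "((\<lambda>r. c * ln r) has_vector_derivative c / x) (at x within {s..t})"
      by (simp add: has_real_derivative_iff_has_vector_derivative)
  qed
  then have "((\<lambda>r. c / r) has_integral (c * ln t - c * ln s)) {s<..<t}"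
    by (simp add: has_integral_Icc_iff_Ioo)
  then have "integral\<^sup>N lborel (\<lambda>x. indicator {s<..<t} x * (c / x)) = c * ln t - c * ln s"
    by (rule nn_integral_has_integral_lebesgue[rotated]) (use s c in simp)
  moreover have "c * ln t - c * ln s = c * ln (t / s)" using s by (simp add: ln_div algebra_simps)
  moreover have "(\<integral>\<^sup>+ r. indicator {s<..<t} r * ennreal (c / r) \<partial>lborel) = integral\<^sup>N lborel (\<lambda>x. indicator {s<..<t} x * (c / x))"
    by (rule nn_integral_cong) (auto simp: indicator_def)
  ultimately show ?thesis by simp
qed

lemma annulus_bound:
  fixes g :: "'a::euclidean_space \<Rightarrow> ennreal" and h :: "'a \<Rightarrow> real" and x0 :: 'a and s t c :: real
  assumes gm[measurable]: "g \<in> borel_measurable borel"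
    and st: "0 < s" "s \<le> t" and c: "c \<ge> 0"
    and gh: "\<And>r z. s < r \<Longrightarrow> r < t \<Longrightarrow> dist x0 z = r \<Longrightarrow> g z = ennreal (h z)"
    and sph: "\<And>r. s < r \<Longrightarrow> r < t \<Longrightarrow> ennreal (c / r) \<le> sphere_nn_integral h x0 r"
  shows "ennreal (c * ln (t / s)) \<le> (\<integral>\<^sup>+ z. g z * indicator {z. s < dist x0 z \<and> dist x0 z < t} z \<partial>lborel)"
proof -
  define F where "F z = g (x0 + z) * indicator {z. s < norm z \<and> norm z < t} z" for z
  have [measurable]: "{z::'a. s < norm z \<and> norm z < t} \<in> sets borel" by measurable
  have [measurable]: "{z. s < dist x0 z \<and> dist x0 z < t} \<in> sets borel" by measurable
  have Fm[measurable]: "F \<in> borel_measurable borel" unfolding F_def by measurable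
  have eq1: "(\<integral>\<^sup>+ z. g z * indicator {z. s < dist x0 z \<and> dist x0 z < t} z \<partial>lborel) = (\<integral>\<^sup>+ z. F z \<partial>lborel)"
  proof -
    have "(\<integral>\<^sup>+ z. g z * indicator {z. s < dist x0 z \<and> dist x0 z < t} z \<partial>lborel)
        = (\<integral>\<^sup>+ z. g z * indicator {z. s < dist x0 z \<and> dist x0 z < t} z \<partial>(distr lborel borel ((+) x0)))"
      by (simp add: lborel_distr_plus)
    also have "\<dots> = (\<integral>\<^sup>+ z. g (x0 + z) * indicator {z. s < dist x0 z \<and> dist x0 z < t} (x0 + z) \<partial>lborel)"
      by (rule nn_integral_distr) measurable
    also have "\<dots> = (\<integral>\<^sup>+ z. F z \<partial>lborel)"
      by (rule nn_integral_cong) (simp add: F_def indicator_def dist_norm)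
    finally show ?thesis .
  qed
  have "ennreal (c * ln (t / s)) = (\<integral>\<^sup>+ r. indicator {s<..<t} r * ennreal (c / r) \<partial>lborel)"
    by (rule log_int[symmetric]) (use st c in auto)
  also have "\<dots> \<le> (\<integral>\<^sup>+ r. ennreal (if 0 < r then real DIM('a) * r^(DIM('a)-1) else 0) *
            (\<integral>\<^sup>+ y. F ((r / norm y) *\<^sub>R y) * indicator (ball 0 1) y \<partial>lborel) \<partial>lborel)"
  proof (rule nn_integral_mono)
    fix r :: real
    show "indicator {s<..<t} r * ennreal (c / r) \<le> ennreal (if 0 < r then real DIM('a) * r^(DIM('a)-1) else 0) *
            (\<integral>\<^sup>+ y. F ((r / norm y) *\<^sub>R y) * indicator (ball 0 1) y \<partial>lborel)"
    proof (cases "s < r \<and> r < t")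
      case False then show ?thesis by simp
    next
      case True
      then have r0: "r > 0" using st by simp
      have "(\<integral>\<^sup>+ y. F ((r / norm y) *\<^sub>R y) * indicator (ball 0 1) y \<partial>lborel)
          = (\<integral>\<^sup>+ y. ennreal (h (x0 + (r / norm y) *\<^sub>R y)) * indicator (ball 0 1) y \<partial>lborel)"
      proof (rule nn_integral_cong_AE)
        show "AE y in lborel. F ((r / norm y) *\<^sub>R y) * indicator (ball 0 1) y = ennreal (h (x0 + (r / norm y) *\<^sub>R y)) * indicator (ball 0 1) y"
          using AE_lborel_singleton[of "0::'a"]
        proof eventually_elim
          case (elim y)
          have nr: "norm ((r / norm y) *\<^sub>R y) = r" using elim r0 by simp
          have "dist x0 (x0 + (r / norm y) *\<^sub>R y) = r" using nr by (simp add: dist_norm)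
          then have "g (x0 + (r / norm y) *\<^sub>R y) = ennreal (h (x0 + (r / norm y) *\<^sub>R y))"
            using gh True by blast
          then show ?case using nr True by (simp add: F_def)
        qed
      qed
      then have "ennreal (if 0 < r then real DIM('a) * r^(DIM('a)-1) else 0) *
            (\<integral>\<^sup>+ y. F ((r / norm y) *\<^sub>R y) * indicator (ball 0 1) y \<partial>lborel) = sphere_nn_integral h x0 r"
        using r0 by (simp add: sphere_nn_integral_def)
      then show ?thesis using sph True by simp
    qed
  qed
  also have "\<dots> \<le> (\<integral>\<^sup>+ z. F z \<partial>lborel)" by (rule polar_le[OF Fm])
  finally show ?thesis using eq1 by simp
qed




lemma ennreal_add_le: "ennreal (x + y) \<le> ennreal x + ennreal y"
proof (cases "x \<ge> 0"; cases "y \<ge> 0")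
  assume "x \<ge> 0" "y \<ge> 0" then show ?thesis by simp
next
  assume "x \<ge> 0" "\<not> y \<ge> 0"
  then have "ennreal (x + y) \<le> ennreal x" by (intro ennreal_leI) simp
  then show ?thesis by (simp add: add_increasing2)
next
  assume "\<not> x \<ge> 0" "y \<ge> 0"
  then have "ennreal (x + y) \<le> ennreal y" by (intro ennreal_leI) simp
  then show ?thesis by (simp add: add_increasing)
next
  assume "\<not> x \<ge> 0" "\<not> y \<ge> 0"
  then show ?thesis by (simp add: ennreal_neg)
qed

lemma phi_mono:
  assumes "superadditive \<Phi>" "\<forall>t\<ge>0. \<Phi> t \<ge> 0" "0 \<le> a" "a \<le> b"
  shows "\<Phi> a \<le> \<Phi> b"
proof -
  have "\<Phi> (a + (b - a)) \<ge> \<Phi> a + \<Phi> (b - a)"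
    using assms(1) unfolding superadditive_def by (rule allE[of _ a], elim allE[of _ "b - a"]) (use assms in simp)
  moreover have "\<Phi> (b - a) \<ge> 0" using assms by auto
  ultimately show ?thesis by simp
qed

lemma phi_sum:
  assumes sa: "superadditive \<Phi>" and nn: "\<forall>t\<ge>0. \<Phi> t \<ge> 0" and "finite S" and "\<forall>j\<in>S. lam j \<ge> (0::real)"
  shows "(\<Sum>j\<in>S. \<Phi> (lam j)) \<le> \<Phi> (\<Sum>j\<in>S. lam j)"
  using assms(3,4)
proof (induction S rule: finite_induct)
  case empty then show ?case using nn by simp
next
  case (insert x F)
  have "\<Phi> (lam x + (\<Sum>j\<in>F. lam j)) \<ge> \<Phi> (lam x) + \<Phi> (\<Sum>j\<in>F. lam j)"
    using sa insert.prems unfolding superadditive_def by (simp add: sum_nonneg)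
  then show ?case using insert by simp
qed

lemma phi_sum2:
  assumes sa: "superadditive \<Phi>" and nn: "\<forall>t\<ge>0. \<Phi> t \<ge> 0" and fS: "finite S" and lnn: "\<forall>j\<in>S. lam j \<ge> (0::real)"
    and ij: "i \<in> S" "j \<in> S" "i \<noteq> j" and bb: "bb \<le> \<Phi> (lam i + lam j) - \<Phi> (lam i) - \<Phi> (lam j)"
  shows "(\<Sum>k\<in>S. \<Phi> (lam k)) + bb \<le> \<Phi> (\<Sum>k\<in>S. lam k)"
proof -
  let ?T = "S - {i} - {j}"
  have s1: "(\<Sum>k\<in>S. lam k) = lam i + lam j + (\<Sum>k\<in>?T. lam k)"
    using fS ij by (simp add: sum.remove[of S i] sum.remove[of "S - {i}" j])
  have s2: "(\<Sum>k\<in>S. \<Phi> (lam k)) = \<Phi> (lam i) + \<Phi> (lam j) + (\<Sum>k\<in>?T. \<Phi> (lam k))"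
    using fS ij by (simp add: sum.remove[of S i] sum.remove[of "S - {i}" j])
  have "\<Phi> (lam i + lam j + (\<Sum>k\<in>?T. lam k)) \<ge> \<Phi> (lam i + lam j) + \<Phi> (\<Sum>k\<in>?T. lam k)"
  proof -
    have sup: "\<And>s t. 0\<le>s \<Longrightarrow> 0\<le>t \<Longrightarrow> \<Phi> s + \<Phi> t \<le> \<Phi> (s+t)" using sa unfolding superadditive_def by blast
    have "0 \<le> (\<Sum>k\<in>?T. lam k)" using lnn by (intro sum_nonneg) auto
    moreover have "0 \<le> lam i + lam j" using lnn ij by simp
    ultimately show ?thesis using sup by blast
  qed
  moreover have "\<Phi> (\<Sum>k\<in>?T. lam k) \<ge> (\<Sum>k\<in>?T. \<Phi> (lam k))"
    using phi_sum[OF sa nn, of ?T lam] fS lnn by simp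
  ultimately show ?thesis using s1 s2 bb by simp
qed

theorem lemma10p2:
  fixes X :: "'a::euclidean_space set"
    and R\<^sub>0 R :: real and N :: nat
    and xc :: "nat \<Rightarrow> 'a" and lam :: "nat \<Rightarrow> real"
    and \<Phi> :: "real \<Rightarrow> real" and h :: "'a \<Rightarrow> real"
  defines "U \<equiv> {x. infdist x X \<le> R\<^sub>0}"
  defines "B \<equiv> (\<lambda>j. cball (xc j) R)"
  defines "D \<equiv> U - (\<Union>j\<in>{1..N}. B j)"
  defines "J \<equiv> (\<lambda>x r. {j\<in>{1..N}. B j \<subseteq> ball x r})"
  defines "b \<equiv> Min {\<Phi> (lam i + lam j) - \<Phi> (lam i) - \<Phi> (lam j) | i j. i \<in> {1..N} \<and> j \<in> {1..N} \<and> i \<noteq> j}"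
  defines "m \<equiv> Min {dist (xc i) (xc j) | i j. i \<in> {1..N} \<and> j \<in> {1..N} \<and> i \<noteq> j} / 2"
  defines "\<rho> \<equiv> max R m"
  assumes dim: "DIM('a) \<ge> 2"
    and R0_pos: "R\<^sub>0 > 0"
    and N_ge: "N \<ge> 2"
    and R_pos: "0 < R" and R_le: "R \<le> R\<^sub>0 / 3 ^ (N - 1)"
    and centers: "\<forall>j\<in>{1..N}. xc j \<in> X"
    and Phi_nonneg: "\<forall>t\<ge>0. \<Phi> t \<ge> 0"
    and Phi_super: "superadditive \<Phi>"
    and lam_nonneg: "\<forall>j\<in>{1..N}. lam j \<ge> 0"
    and h_meas: "(\<lambda>x. indicator D x * h x) \<in> borel_measurable borel"
    and h_nonneg: "\<forall>x\<in>D. h x \<ge> 0"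
    and h_sphere: "\<forall>x\<in>X. \<forall>r. 0 < r \<and> r \<le> R\<^sub>0 \<and> (\<forall>j\<in>{1..N}. sphere x r \<inter> B j = {}) \<longrightarrow>
                     sphere_nn_integral h x r \<ge> ennreal ((1 / r) * \<Phi> (\<Sum>j\<in>J x r. lam j))"
  shows "(\<integral>\<^sup>+ x. ennreal (h x) * indicator D x \<partial>lborel) \<ge>
           ennreal (ln (R\<^sub>0 / (3 ^ (N - 1) * R)) * (\<Sum>j\<in>{1..N}. \<Phi> (lam j))
                    + b * ln (R\<^sub>0 / (3 ^ (N - 1) * \<rho>)))"
proof -
  have sup: "\<And>s t. 0 \<le> s \<Longrightarrow> 0 \<le> t \<Longrightarrow> \<Phi> s + \<Phi> t \<le> \<Phi> (s + t)"
    using Phi_super unfolding superadditive_def by blast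
  have N1: "1 \<in> {1..N}" "2 \<in> {1..N}" using N_ge by auto
  define g where "g x = ennreal (indicator D x * h x)" for x
  have gm[measurable]: "g \<in> borel_measurable borel"
    unfolding g_def by (rule measurable_compose[OF h_meas]) measurable
  have closedU: "closed U" unfolding U_def
    by (intro closed_Collect_le continuous_intros)
  have Dsets[measurable]: "D \<in> sets borel" unfolding D_def B_def
    using closedU by (intro sets.Diff borel_closed closed_UN) auto
  define UU where "UU C s = (\<Union>c\<in>C. cball (xc c) s)" for C :: "nat set" and s
  define Q where "Q C s = (\<integral>\<^sup>+x. g x * indicator (D - UU C s) x \<partial>lborel)" for C s
  define \<Lambda> where "\<Lambda> a c = (\<Sum>j\<in>{j\<in>{1..N}. a j = c}. lam j)" for a :: "nat \<Rightarrow> nat" and c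
  define inv where "inv C a s \<longleftrightarrow> C \<subseteq> {1..N} \<and> (\<forall>j\<in>{1..N}. a j \<in> C \<and> dist (xc (a j)) (xc j) + R \<le> s)"
    for C a s
  define SS where "SS = (\<Sum>j\<in>{1..N}. \<Phi> (lam j))"
  define P where "P C a = (\<Sum>c\<in>C. \<Phi> (\<Lambda> a c))" for C a
  have UUsets[measurable]: "UU C s \<in> sets borel" if "finite C" for C s
    unfolding UU_def using that by (intro borel_closed closed_UN) auto
  have Qmono: "Q C' s' \<le> Q C s" if "UU C s \<subseteq> UU C' s'" for C C' s s'
    unfolding Q_def using that by (intro nn_integral_mono) (auto split: split_indicator)
  have fin_pairs: "finite {F i j | i j. i \<in> A \<and> j \<in> A \<and> i \<noteq> j}" if "finite A" for F :: "nat \<Rightarrow> nat \<Rightarrow> real" and A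
    by (rule finite_subset[of _ "(\<lambda>(i,j). F i j) ` (A \<times> A)"]) (use that in auto)
  have nepairs: "{F i j | i j. i \<in> {1..N} \<and> j \<in> {1..N} \<and> i \<noteq> j} \<noteq> {}" for F :: "nat \<Rightarrow> nat \<Rightarrow> real"
  proof -
    have "F 1 2 \<in> {F i j | i j. i \<in> {1..N} \<and> j \<in> {1..N} \<and> i \<noteq> j}"
      using N1 by (intro CollectI exI[of _ 1] exI[of _ 2]) auto
    then show ?thesis by blast
  qed
  have ble: "b \<le> \<Phi> (lam i + lam j) - \<Phi> (lam i) - \<Phi> (lam j)" if "i \<in> {1..N}" "j \<in> {1..N}" "i \<noteq> j" for i j
    unfolding b_def by (rule Min_le[OF fin_pairs]) (use that in auto)
  have b_nonneg: "0 \<le> b"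
  proof -
    have "b \<in> {\<Phi> (lam i + lam j) - \<Phi> (lam i) - \<Phi> (lam j) | i j. i \<in> {1..N} \<and> j \<in> {1..N} \<and> i \<noteq> j}"
      unfolding b_def by (rule Min_in[OF fin_pairs nepairs]) simp
    then obtain i j where ij: "i \<in> {1..N}" "j \<in> {1..N}" "b = \<Phi> (lam i + lam j) - \<Phi> (lam i) - \<Phi> (lam j)" by blast
    have "\<Phi> (lam i) + \<Phi> (lam j) \<le> \<Phi> (lam i + lam j)" using sup lam_nonneg ij by simp
    then show ?thesis using ij by simp
  qed
  have SS_nonneg: "0 \<le> SS" unfolding SS_def using Phi_nonneg lam_nonneg by (intro sum_nonneg) auto
  have finC: "finite C" if "inv C a s" for C a s
    using that unfolding inv_def by (meson finite_atLeastAtMost finite_subset)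
  have Psum1: "SS \<le> P C a" if inv: "inv C a s" for C a s
  proof -
    have fC: "finite C" using finC[OF inv] .
    have img: "a ` {1..N} \<subseteq> C" using inv unfolding inv_def by auto
    have "SS = (\<Sum>c\<in>C. \<Sum>j\<in>{j\<in>{1..N}. a j = c}. \<Phi> (lam j))"
      unfolding SS_def by (rule sum.group[OF _ fC img, symmetric]) simp
    also have "\<dots> \<le> P C a" unfolding P_def \<Lambda>_def
      by (intro sum_mono phi_sum[OF Phi_super Phi_nonneg]) (use lam_nonneg in auto)
    finally show ?thesis .
  qed
  have Psum2: "SS + b \<le> P C a" if inv: "inv C a s" and cardC: "card C < N" for C a s
  proof -
    have fC: "finite C" using finC[OF inv] .
    have img: "a ` {1..N} \<subseteq> C" using inv unfolding inv_def by auto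
    have "\<not> inj_on a {1..N}"
    proof
      assume "inj_on a {1..N}"
      then have "card (a ` {1..N}) = N" by (simp add: card_image)
      moreover have "card (a ` {1..N}) \<le> card C" using card_mono[OF fC img] .
      ultimately show False using cardC by simp
    qed
    then obtain i j where ij: "i \<in> {1..N}" "j \<in> {1..N}" "i \<noteq> j" "a i = a j"
      unfolding inj_on_def by blast
    define c0 where "c0 = a i"
    have c0C: "c0 \<in> C" using img ij unfolding c0_def by auto
    let ?fib = "\<lambda>c. {j\<in>{1..N}. a j = c}"
    have "SS = (\<Sum>c\<in>C. \<Sum>j\<in>?fib c. \<Phi> (lam j))"
      unfolding SS_def by (rule sum.group[OF _ fC img, symmetric]) simp
    also have "\<dots> = (\<Sum>j\<in>?fib c0. \<Phi> (lam j)) + (\<Sum>c\<in>C - {c0}. \<Sum>j\<in>?fib c. \<Phi> (lam j))"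
      using fC c0C by (simp add: sum.remove)
    finally have e1: "SS = (\<Sum>j\<in>?fib c0. \<Phi> (lam j)) + (\<Sum>c\<in>C - {c0}. \<Sum>j\<in>?fib c. \<Phi> (lam j))" .
    have e2: "P C a = \<Phi> (\<Lambda> a c0) + (\<Sum>c\<in>C - {c0}. \<Phi> (\<Lambda> a c))"
      unfolding P_def using fC c0C by (simp add: sum.remove)
    have i1: "(\<Sum>j\<in>?fib c0. \<Phi> (lam j)) + b \<le> \<Phi> (\<Lambda> a c0)"
      unfolding \<Lambda>_def
      by (rule phi_sum2[OF Phi_super Phi_nonneg _ _ _ _ ij(3) ble[OF ij(1,2,3)]]) (use lam_nonneg ij c0_def in auto)
    have i2: "(\<Sum>c\<in>C - {c0}. \<Sum>j\<in>?fib c. \<Phi> (lam j)) \<le> (\<Sum>c\<in>C - {c0}. \<Phi> (\<Lambda> a c))"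
      unfolding \<Lambda>_def
      by (intro sum_mono phi_sum[OF Phi_super Phi_nonneg]) (use lam_nonneg in auto)
    show ?thesis using e1 e2 i1 i2 by linarith
  qed
  have avoid: "z \<in> D \<and> (\<forall>c'\<in>C. c' \<noteq> c \<longrightarrow> t < dist (xc c') z)"
    if inv: "inv C a s" and st: "0 < s" "s \<le> t" "t \<le> R\<^sub>0"
      and pw: "\<forall>c1\<in>C. \<forall>c2\<in>C. c1 \<noteq> c2 \<longrightarrow> 2 * t \<le> dist (xc c1) (xc c2)"
      and cC: "c \<in> C" and z: "s < dist (xc c) z" "dist (xc c) z < t" for C a s t c z
  proof -
    have cN: "c \<in> {1..N}" using inv cC unfolding inv_def by auto
    have zU: "z \<in> U"
    proof -
      have "infdist z X \<le> dist z (xc c)" using centers cN by (intro infdist_le) auto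
      then show ?thesis unfolding U_def using z st by (simp add: dist_commute)
    qed
    have far: "t < dist (xc c') z" if "c' \<in> C" "c' \<noteq> c" for c'
    proof -
      have "2 * t \<le> dist (xc c') (xc c)" using pw that cC by auto
      moreover have "dist (xc c') (xc c) \<le> dist (xc c') z + dist (xc c) z"
        by (metis dist_commute dist_triangle)
      ultimately show ?thesis using z by linarith
    qed
    have notB: "z \<notin> B j" if j: "j \<in> {1..N}" for j
    proof -
      have aj: "a j \<in> C" "dist (xc (a j)) (xc j) + R \<le> s" using inv j unfolding inv_def by auto
      have tri: "dist (xc (a j)) z \<le> dist (xc (a j)) (xc j) + dist (xc j) z" by (rule dist_triangle)
      have "dist (xc (a j)) z > s"
      proof (cases "a j = c")
        case True then show ?thesis using z by simp
      next
        case False then show ?thesis using far[OF aj(1) False] st by linarith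
      qed
      then have "dist (xc j) z > R" using tri aj(2) by linarith
      then show ?thesis unfolding B_def by simp
    qed
    show ?thesis using zU notB far unfolding D_def by blast
  qed
  have growth: "ennreal (P C a * ln (t / s)) + Q C t \<le> Q C s"
    if inv: "inv C a s" and st: "0 < s" "s \<le> t" "t \<le> R\<^sub>0"
      and pw: "\<forall>c1\<in>C. \<forall>c2\<in>C. c1 \<noteq> c2 \<longrightarrow> 2 * t \<le> dist (xc c1) (xc c2)" for C a s t
  proof -
    have fC: "finite C" using finC[OF inv] .
    define Ann where "Ann c = {z. s < dist (xc c) z \<and> dist (xc c) z < t}" for c
    have Ann_sets[measurable]: "Ann c \<in> sets borel" for c unfolding Ann_def by measurable
    have lnn: "0 \<le> ln (t / s)" using st by simp
    have Lnn: "0 \<le> \<Lambda> a c" for c unfolding \<Lambda>_def using lam_nonneg by (intro sum_nonneg) auto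
    have ann: "ennreal (\<Phi> (\<Lambda> a c) * ln (t / s)) \<le> (\<integral>\<^sup>+z. g z * indicator (Ann c) z \<partial>lborel)" if cC: "c \<in> C" for c
      unfolding Ann_def
    proof (rule annulus_bound[OF gm st(1,2)])
      show "0 \<le> \<Phi> (\<Lambda> a c)" using Phi_nonneg Lnn by simp
      show "g z = ennreal (h z)" if "s < r" "r < t" "dist (xc c) z = r" for r z
      proof -
        have "z \<in> D" using avoid[OF inv st pw cC, of z] that by simp
        then show ?thesis by (simp add: g_def)
      qed
      show "ennreal (\<Phi> (\<Lambda> a c) / r) \<le> sphere_nn_integral h (xc c) r" if r: "s < r" "r < t" for r
      proof -
        have cN: "c \<in> {1..N}" using inv cC unfolding inv_def by auto
        have sph_avoid: "\<forall>j\<in>{1..N}. sphere (xc c) r \<inter> B j = {}"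
        proof (intro ballI equalityI subsetI)
          fix j z assume j: "j \<in> {1..N}" and zz: "z \<in> sphere (xc c) r \<inter> B j"
          then have "z \<in> D" using avoid[OF inv st pw cC, of z] r by simp
          then show "z \<in> {}" using zz j unfolding D_def by auto
        qed auto
        have hs: "sphere_nn_integral h (xc c) r \<ge> ennreal ((1 / r) * \<Phi> (\<Sum>j\<in>J (xc c) r. lam j))"
          using h_sphere centers cN r st sph_avoid by simp
        have fib: "{j\<in>{1..N}. a j = c} \<subseteq> J (xc c) r"
        proof
          fix j assume j: "j \<in> {j\<in>{1..N}. a j = c}"
          then have "dist (xc c) (xc j) + R \<le> s" using inv unfolding inv_def by auto
          then have "B j \<subseteq> ball (xc c) r" unfolding B_def using r
            by (auto simp: subset_eq) (smt (verit) dist_triangle)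
          then show "j \<in> J (xc c) r" using j unfolding J_def by simp
        qed
        have "\<Lambda> a c \<le> (\<Sum>j\<in>J (xc c) r. lam j)" unfolding \<Lambda>_def
          by (rule sum_mono2) (use fib lam_nonneg in \<open>auto simp: J_def\<close>)
        then have "\<Phi> (\<Lambda> a c) \<le> \<Phi> (\<Sum>j\<in>J (xc c) r. lam j)"
          by (intro phi_mono[OF Phi_super Phi_nonneg Lnn])
        then have "\<Phi> (\<Lambda> a c) / r \<le> (1 / r) * \<Phi> (\<Sum>j\<in>J (xc c) r. lam j)"
          using r st by (simp add: divide_right_mono)
        then show ?thesis using hs by (meson ennreal_leI order_trans)
      qed
    qed
    have pt: "(\<Sum>c\<in>C. g x * indicator (Ann c) x) + g x * indicator (D - UU C t) x \<le> g x * indicator (D - UU C s) x" for x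
    proof (cases "\<exists>c\<in>C. x \<in> Ann c")
      case True
      then obtain c where cC: "c \<in> C" and xA: "x \<in> Ann c" by blast
      have av: "x \<in> D \<and> (\<forall>c'\<in>C. c' \<noteq> c \<longrightarrow> t < dist (xc c') x)"
        using avoid[OF inv st pw cC, of x] xA unfolding Ann_def by simp
      have others: "x \<notin> Ann c'" if "c' \<in> C" "c' \<noteq> c" for c'
        using av that unfolding Ann_def by auto
      have "(\<Sum>c'\<in>C. g x * indicator (Ann c') x) = g x * indicator (Ann c) x + (\<Sum>c'\<in>C - {c}. g x * indicator (Ann c') x)"
        by (rule sum.remove[OF fC cC])
      also have "(\<Sum>c'\<in>C - {c}. g x * indicator (Ann c') x) = 0"
        using others by (intro sum.neutral) auto
      finally have s1: "(\<Sum>c'\<in>C. g x * indicator (Ann c') x) = g x" using xA by simp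
      have "x \<in> UU C t" unfolding UU_def using cC xA unfolding Ann_def by (intro UN_I[OF cC]) auto
      moreover have "x \<notin> UU C s"
      proof
        assume "x \<in> UU C s"
        then obtain c' where "c' \<in> C" "dist (xc c') x \<le> s" unfolding UU_def by auto
        then show False using av xA st unfolding Ann_def by (cases "c' = c") auto
      qed
      ultimately show ?thesis using s1 av by simp
    next
      case False
      then have "(\<Sum>c\<in>C. g x * indicator (Ann c) x) = 0" by (intro sum.neutral) auto
      moreover have "UU C s \<subseteq> UU C t" unfolding UU_def using st by auto
      ultimately show ?thesis by (auto split: split_indicator)
    qed
    have "ennreal (P C a * ln (t / s)) = (\<Sum>c\<in>C. ennreal (\<Phi> (\<Lambda> a c) * ln (t / s)))"
      unfolding P_def sum_distrib_right using Phi_nonneg Lnn lnn by (intro sum_ennreal[symmetric]) simp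
    also have "\<dots> \<le> (\<Sum>c\<in>C. (\<integral>\<^sup>+z. g z * indicator (Ann c) z \<partial>lborel))"
      using ann by (intro sum_mono) auto
    also have "\<dots> = (\<integral>\<^sup>+z. (\<Sum>c\<in>C. g z * indicator (Ann c) z) \<partial>lborel)"
      by (rule nn_integral_sum[symmetric]) measurable
    finally have "ennreal (P C a * ln (t / s)) + Q C t \<le> (\<integral>\<^sup>+z. (\<Sum>c\<in>C. g z * indicator (Ann c) z) \<partial>lborel) + Q C t"
      by (intro add_right_mono)
    also have "\<dots> = (\<integral>\<^sup>+z. (\<Sum>c\<in>C. g z * indicator (Ann c) z) + g z * indicator (D - UU C t) z \<partial>lborel)"
      unfolding Q_def using fC by (intro nn_integral_add[symmetric]) measurable
    also have "\<dots> \<le> Q C s" unfolding Q_def by (intro nn_integral_mono pt)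
    finally show ?thesis .
  qed
  have merge: "inv (C - {c2}) (\<lambda>j. if a j = c2 then c1 else a j) (3 * s) \<and> Q (C - {c2}) (3 * s) \<le> Q C s"
    if inv: "inv C a s" and cc: "c1 \<in> C" "c2 \<in> C" "c1 \<noteq> c2" and d: "dist (xc c1) (xc c2) \<le> 2 * s" and s0: "0 < s"
    for C a s c1 c2
  proof
    show "inv (C - {c2}) (\<lambda>j. if a j = c2 then c1 else a j) (3 * s)"
      unfolding inv_def
    proof (intro conjI ballI)
      show "C - {c2} \<subseteq> {1..N}" using inv unfolding inv_def by auto
      fix j assume j: "j \<in> {1..N}"
      have aj: "a j \<in> C" "dist (xc (a j)) (xc j) + R \<le> s" using inv j unfolding inv_def by auto
      show "(if a j = c2 then c1 else a j) \<in> C - {c2}" using aj cc by auto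
      show "dist (xc (if a j = c2 then c1 else a j)) (xc j) + R \<le> 3 * s"
      proof (cases "a j = c2")
        case True
        have "dist (xc c1) (xc j) \<le> dist (xc c1) (xc c2) + dist (xc c2) (xc j)" by (rule dist_triangle)
        then show ?thesis using True aj d by simp
      next
        case False then show ?thesis using aj s0 by simp
      qed
    qed
    show "Q (C - {c2}) (3 * s) \<le> Q C s"
    proof (rule Qmono)
      show "UU C s \<subseteq> UU (C - {c2}) (3 * s)"
      proof
        fix x assume "x \<in> UU C s"
        then obtain c where c: "c \<in> C" "dist (xc c) x \<le> s" unfolding UU_def by auto
        show "x \<in> UU (C - {c2}) (3 * s)"
        proof (cases "c = c2")
          case True
          have "dist (xc c1) x \<le> dist (xc c1) (xc c2) + dist (xc c2) x" by (rule dist_triangle)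
          then have "dist (xc c1) x \<le> 3 * s" using True c d by simp
          then show ?thesis unfolding UU_def using cc by auto
        next
          case False
          then have "c \<in> C - {c2}" using c by simp
          then show ?thesis unfolding UU_def using c s0 by (intro UN_I[of c]) auto
        qed
      qed
    qed
  qed
  have Sb: "0 \<le> SS + b" using SS_nonneg b_nonneg by simp
  have claim: "\<forall>C a s. card C = k \<longrightarrow> inv C a s \<longrightarrow> card C < N \<longrightarrow> 0 < s \<longrightarrow>
      ennreal ((SS + b) * ln (R\<^sub>0 / (3^(k-1) * s))) \<le> Q C s" for k
  proof (induction k)
    case 0
    show ?case
    proof (intro allI impI)
      fix C a s assume c0: "card C = 0" and inv: "inv C a s"
      have "finite C" "a 1 \<in> C" using finC[OF inv] inv N1 unfolding inv_def by auto
      then show "ennreal ((SS + b) * ln (R\<^sub>0 / (3^(0-1) * s))) \<le> Q C s" using c0 by auto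
    qed
  next
    case (Suc k)
    show ?case
    proof (intro allI impI)
      fix C a s assume cardC: "card C = Suc k" and inv: "inv C a s" and lt: "card C < N" and s0: "0 < s"
      have fC: "finite C" using finC[OF inv] .
      have mergeIH: "ennreal ((SS + b) * ln (R\<^sub>0 / (3^k * u))) \<le> Q C u"
        if invu: "inv C a u" and u0: "0 < u" and cc: "c1 \<in> C" "c2 \<in> C" "c1 \<noteq> c2"
          and d: "dist (xc c1) (xc c2) \<le> 2 * u" for u c1 c2
      proof -
        from merge[OF invu cc d u0]
        have m1: "inv (C - {c2}) (\<lambda>j. if a j = c2 then c1 else a j) (3*u)" and m2: "Q (C - {c2}) (3*u) \<le> Q C u"
          by auto
        have card': "card (C - {c2}) = k" using cardC fC cc by simp
        have "card {c1, c2} \<le> card C" using fC cc by (intro card_mono) auto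
        then have k1: "k \<ge> 1" using cc cardC by simp
        have "ennreal ((SS + b) * ln (R\<^sub>0 / (3^(k-1) * (3*u)))) \<le> Q (C - {c2}) (3*u)"
          using Suc.IH card' m1 lt cardC u0 by simp
        moreover have "3^(k-1) * (3*u) = 3^k * (u::real)" using k1 by (cases k) auto
        ultimately show ?thesis using m2 by (metis order_trans)
      qed
      show "ennreal ((SS + b) * ln (R\<^sub>0 / (3 ^ (Suc k - 1) * s))) \<le> Q C s"
      proof (cases "R\<^sub>0 \<le> s")
        case True
        have "(SS + b) * ln (R\<^sub>0 / (3^k * s)) \<le> 0"
        proof (rule mult_nonneg_nonpos[OF Sb])
          have "s \<le> 3^k * s" using s0 by simp
          then have "R\<^sub>0 \<le> 3^k * s" using True by linarith
          then have "R\<^sub>0 / (3^k * s) \<le> 1" using s0 by simp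
          then show "ln (R\<^sub>0 / (3^k * s)) \<le> 0" using R0_pos s0 by simp
        qed
        then show ?thesis by (simp add: ennreal_neg)
      next
        case sR: False
        show ?thesis
        proof (cases "\<exists>c1\<in>C. \<exists>c2\<in>C. c1 \<noteq> c2 \<and> dist (xc c1) (xc c2) \<le> 2 * s")
          case True
          then obtain c1 c2 where "c1 \<in> C" "c2 \<in> C" "c1 \<noteq> c2" "dist (xc c1) (xc c2) \<le> 2 * s" by blast
          then show ?thesis using mergeIH[OF inv s0] by simp
        next
          case False
          define T where "T = insert R\<^sub>0 {dist (xc c1) (xc c2) / 2 | c1 c2. c1 \<in> C \<and> c2 \<in> C \<and> c1 \<noteq> c2}"
          define t where "t = Min T"
          have fT: "finite T" unfolding T_def using fin_pairs[OF fC, of "\<lambda>i j. dist (xc i) (xc j) / 2"] by simp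
          have tT: "t \<in> T" unfolding t_def using fT by (intro Min_in) (auto simp: T_def)
          have tR: "t \<le> R\<^sub>0" unfolding t_def using fT by (intro Min_le) (auto simp: T_def)
          have tpw: "\<forall>c1\<in>C. \<forall>c2\<in>C. c1 \<noteq> c2 \<longrightarrow> 2 * t \<le> dist (xc c1) (xc c2)"
          proof (intro ballI impI)
            fix c1 c2 assume "c1 \<in> C" "c2 \<in> C" "c1 \<noteq> c2"
            then have "t \<le> dist (xc c1) (xc c2) / 2" unfolding t_def using fT by (intro Min_le) (auto simp: T_def)
            then show "2 * t \<le> dist (xc c1) (xc c2)" by simp
          qed
          have allT: "\<forall>x\<in>T. s < x"
          proof
            fix x assume "x \<in> T"
            then consider "x = R\<^sub>0" | c1 c2 where "c1 \<in> C" "c2 \<in> C" "c1 \<noteq> c2" "x = dist (xc c1) (xc c2) / 2"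
              unfolding T_def by blast
            then show "s < x"
            proof cases
              case 1 then show ?thesis using sR by simp
            next
              case 2 then show ?thesis using False by force
            qed
          qed
          have st: "s < t" unfolding t_def using fT allT
            by (subst Min_gr_iff) (auto simp: T_def)
          have invt: "inv C a t" using inv st unfolding inv_def by force
          have gr: "ennreal (P C a * ln (t / s)) + Q C t \<le> Q C s"
            by (rule growth[OF inv s0 _ tR tpw]) (use st in simp)
          have PSb: "SS + b \<le> P C a" by (rule Psum2[OF inv lt])
          have lts: "0 \<le> ln (t / s)" using st s0 by simp
          show ?thesis
          proof (cases "t = R\<^sub>0")
            case True
            have "1 \<le> (3::real)^k" by simp
            then have "R\<^sub>0 / (3^k * s) \<le> R\<^sub>0 / s" using R0_pos s0
              by (simp add: divide_left_mono mult_le_cancel_right1)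
            then have "ln (R\<^sub>0 / (3^k * s)) \<le> ln (R\<^sub>0 / s)" using R0_pos s0 by simp
            then have "(SS + b) * ln (R\<^sub>0 / (3^k * s)) \<le> (SS + b) * ln (R\<^sub>0 / s)"
              by (rule mult_left_mono[OF _ Sb])
            also have "\<dots> \<le> P C a * ln (R\<^sub>0 / s)"
              by (rule mult_right_mono[OF PSb]) (use lts True in simp)
            finally have "ennreal ((SS + b) * ln (R\<^sub>0 / (3^k * s))) \<le> ennreal (P C a * ln (t / s))"
              using True by (intro ennreal_leI) simp
            also have "\<dots> \<le> Q C s" using gr by (metis add_increasing2 zero_le order_trans le_iff_add)
            finally show ?thesis by simp
          next
            case False
            then obtain c1 c2 where cc: "c1 \<in> C" "c2 \<in> C" "c1 \<noteq> c2" and tdef: "t = dist (xc c1) (xc c2) / 2"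
              using tT unfolding T_def by auto
            have IH': "ennreal ((SS + b) * ln (R\<^sub>0 / (3^k * t))) \<le> Q C t"
              by (rule mergeIH[OF invt _ cc]) (use st s0 tdef in simp_all)
            have "ln (t / s * (R\<^sub>0 / (3^k * t))) = ln (t / s) + ln (R\<^sub>0 / (3^k * t))"
              using st s0 R0_pos by (subst ln_mult) auto
            moreover have "t / s * (R\<^sub>0 / (3^k * t)) = R\<^sub>0 / (3^k * s)" using st s0 by (simp add: field_simps)
            ultimately have lnsplit: "ln (R\<^sub>0 / (3^k * s)) = ln (t / s) + ln (R\<^sub>0 / (3^k * t))" by simp
            have "(SS + b) * ln (R\<^sub>0 / (3^k * s)) \<le> P C a * ln (t / s) + (SS + b) * ln (R\<^sub>0 / (3^k * t))"
              using lnsplit mult_right_mono[OF PSb lts] by (simp add: distrib_left)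
            then have "ennreal ((SS + b) * ln (R\<^sub>0 / (3^k * s))) \<le> ennreal (P C a * ln (t / s) + (SS + b) * ln (R\<^sub>0 / (3^k * t)))"
              by (rule ennreal_leI)
            also have "\<dots> \<le> ennreal (P C a * ln (t / s)) + ennreal ((SS + b) * ln (R\<^sub>0 / (3^k * t)))"
              by (rule ennreal_add_le)
            also have "\<dots> \<le> ennreal (P C a * ln (t / s)) + Q C t" using IH' by (rule add_left_mono)
            also have "\<dots> \<le> Q C s" by (rule gr)
            finally show ?thesis by simp
          qed
        qed
      qed
    qed
  qed
  have C0: "inv {1..N} (\<lambda>j. j) u" if "R \<le> u" for u unfolding inv_def using that by auto
  have DB: "D - UU {1..N} R = D" unfolding UU_def D_def B_def by auto
  have Q0: "Q {1..N} R = (\<integral>\<^sup>+ x. ennreal (h x) * indicator D x \<partial>lborel)"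
    unfolding Q_def DB by (rule nn_integral_cong) (auto simp: g_def split: split_indicator)
  define M where "M = {dist (xc i) (xc j) | i j. i \<in> {1..N} \<and> j \<in> {1..N} \<and> i \<noteq> j}"
  have fM: "finite M" unfolding M_def using fin_pairs[of "{1..N}" "\<lambda>i j. dist (xc i) (xc j)"] by simp
  have neM: "M \<noteq> {}" unfolding M_def by (rule nepairs)
  have m_eq: "m = Min M / 2" unfolding m_def M_def ..
  have "Min M \<in> M" using fM neM by (rule Min_in)
  then obtain i0 j0 where ij0: "i0 \<in> {1..N}" "j0 \<in> {1..N}" "i0 \<noteq> j0" "Min M = dist (xc i0) (xc j0)"
    unfolding M_def by blast
  have mle: "\<forall>i\<in>{1..N}. \<forall>j\<in>{1..N}. i \<noteq> j \<longrightarrow> 2 * m \<le> dist (xc i) (xc j)"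
  proof (intro ballI impI)
    fix i j assume "i \<in> {1..N}" "j \<in> {1..N}" "i \<noteq> j"
    then have "Min M \<le> dist (xc i) (xc j)" using fM unfolding M_def by (intro Min_le) auto
    then show "2 * m \<le> dist (xc i) (xc j)" unfolding m_eq by simp
  qed
  have d0: "dist (xc i0) (xc j0) = 2 * m" using ij0 m_eq by simp
  have R3: "R \<le> R\<^sub>0"
  proof -
    have "(1::real) \<le> 3 ^ (N - 1)" by simp
    then have "R\<^sub>0 / 3 ^ (N - 1) \<le> R\<^sub>0" using R0_pos by (simp add: divide_le_eq)
    then show ?thesis using R_le by linarith
  qed
  have claimN: "ennreal ((SS + b) * ln (R\<^sub>0 / (3^(N-1) * u))) \<le> Q {1..N} u"
    if invu: "inv {1..N} (\<lambda>j. j) u" and u0: "0 < u" and du: "dist (xc i0) (xc j0) \<le> 2 * u" for u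
  proof -
    from merge[OF invu ij0(1,2,3) du u0]
    have m1: "inv ({1..N} - {j0}) (\<lambda>j. if j = j0 then i0 else j) (3*u)" and m2: "Q ({1..N} - {j0}) (3*u) \<le> Q {1..N} u"
      by auto
    have card': "card ({1..N} - {j0}) = N - 1" using ij0 by simp
    have e: "Suc (N-1-1) = N-1" using N_ge by simp
    have e2: "(3::real)^(N-1) = 3 * 3^(N-1-1)" by (metis e power_Suc)
    have "ennreal ((SS + b) * ln (R\<^sub>0 / (3^(N-1-1) * (3*u)))) \<le> Q ({1..N} - {j0}) (3*u)"
      using claim[of "N-1", rule_format, OF card' m1] u0 N_ge card' by simp
    moreover have "3^(N-1-1) * (3*u) = 3^(N-1) * (u::real)" unfolding e2 by simp
    ultimately show ?thesis using m2 by (metis order_trans)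
  qed
  have PS0: "SS \<le> P {1..N} (\<lambda>j. j)" by (rule Psum1[OF C0[OF order_refl]])
  let ?T = "ln (R\<^sub>0 / (3 ^ (N - 1) * R)) * SS + b * ln (R\<^sub>0 / (3 ^ (N - 1) * \<rho>))"
  have goal: "ennreal ?T \<le> Q {1..N} R"
  proof (cases "m \<le> R")
    case True
    then have rho: "\<rho> = R" unfolding \<rho>_def by simp
    have "ennreal ((SS + b) * ln (R\<^sub>0 / (3^(N-1) * R))) \<le> Q {1..N} R"
      by (rule claimN[OF C0[OF order_refl] R_pos]) (use d0 True in simp)
    then show ?thesis unfolding rho by (simp add: algebra_simps)
  next
    case False
    then have rho: "\<rho> = m" unfolding \<rho>_def by simp
    define t where "t = min R\<^sub>0 m"
    have Rt: "R \<le> t" unfolding t_def using R3 False by simp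
    have tpw: "\<forall>c1\<in>{1..N}. \<forall>c2\<in>{1..N}. c1 \<noteq> c2 \<longrightarrow> 2 * t \<le> dist (xc c1) (xc c2)"
    proof (intro ballI impI)
      fix c1 c2 assume "c1 \<in> {1..N}" "c2 \<in> {1..N}" "c1 \<noteq> c2"
      then have "2 * m \<le> dist (xc c1) (xc c2)" using mle by blast
      moreover have "t \<le> m" unfolding t_def by simp
      ultimately show "2 * t \<le> dist (xc c1) (xc c2)" by linarith
    qed
    have gr: "ennreal (P {1..N} (\<lambda>j. j) * ln (t / R)) + Q {1..N} t \<le> Q {1..N} R"
      by (rule growth[OF C0[OF order_refl] R_pos Rt _ tpw]) (simp add: t_def)
    have lnt: "0 \<le> ln (t / R)" using Rt R_pos by simp
    have P1: "SS * ln (t / R) \<le> P {1..N} (\<lambda>j. j) * ln (t / R)" by (rule mult_right_mono[OF PS0 lnt])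
    have m0: "m > 0" using False R_pos by simp
    show ?thesis
    proof (cases "R\<^sub>0 \<le> m")
      case True
      then have tR: "t = R\<^sub>0" unfolding t_def by simp
      have "1 \<le> (3::real)^(N-1)" by simp
      then have "R\<^sub>0 / (3^(N-1) * R) \<le> R\<^sub>0 / R" using R0_pos R_pos
        by (simp add: divide_left_mono mult_le_cancel_right1)
      then have "ln (R\<^sub>0 / (3^(N-1) * R)) \<le> ln (R\<^sub>0 / R)" using R0_pos R_pos by simp
      then have a1: "ln (R\<^sub>0 / (3^(N-1) * R)) * SS \<le> SS * ln (t / R)"
        unfolding tR using SS_nonneg by (simp add: mult.commute mult_left_mono)
      have "m \<le> 3^(N-1) * m" using m0 by simp
      then have "R\<^sub>0 \<le> 3^(N-1) * m" using True by linarith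
      then have "R\<^sub>0 / (3^(N-1) * m) \<le> 1" using m0 by simp
      then have "ln (R\<^sub>0 / (3^(N-1) * m)) \<le> 0" using R0_pos m0 by simp
      then have a2: "b * ln (R\<^sub>0 / (3 ^ (N - 1) * \<rho>)) \<le> 0" unfolding rho using b_nonneg
        by (simp add: mult_nonneg_nonpos)
      have "ennreal ?T \<le> ennreal (P {1..N} (\<lambda>j. j) * ln (t / R))"
        using a1 a2 P1 by (intro ennreal_leI) linarith
      also have "\<dots> \<le> Q {1..N} R" using gr by (metis add_increasing2 zero_le order_trans le_iff_add)
      finally show ?thesis .
    next
      case False
      then have tm: "t = m" unfolding t_def by simp
      have IH': "ennreal ((SS + b) * ln (R\<^sub>0 / (3^(N-1) * m))) \<le> Q {1..N} m"
        by (rule claimN[OF C0 m0]) (use Rt tm d0 in simp_all)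
      have "ln (m / R * (R\<^sub>0 / (3^(N-1) * m))) = ln (m / R) + ln (R\<^sub>0 / (3^(N-1) * m))"
        using m0 R_pos R0_pos by (subst ln_mult) auto
      moreover have "m / R * (R\<^sub>0 / (3^(N-1) * m)) = R\<^sub>0 / (3^(N-1) * R)" using m0 R_pos by (simp add: field_simps)
      ultimately have lnsplit: "ln (R\<^sub>0 / (3^(N-1) * R)) = ln (m / R) + ln (R\<^sub>0 / (3^(N-1) * m))" by simp
      have "?T \<le> P {1..N} (\<lambda>j. j) * ln (t / R) + (SS + b) * ln (R\<^sub>0 / (3^(N-1) * m))"
        using lnsplit P1 unfolding rho tm by (simp add: algebra_simps)
      then have "ennreal ?T \<le> ennreal (P {1..N} (\<lambda>j. j) * ln (t / R) + (SS + b) * ln (R\<^sub>0 / (3^(N-1) * m)))"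
        by (rule ennreal_leI)
      also have "\<dots> \<le> ennreal (P {1..N} (\<lambda>j. j) * ln (t / R)) + ennreal ((SS + b) * ln (R\<^sub>0 / (3^(N-1) * m)))"
        by (rule ennreal_add_le)
      also have "\<dots> \<le> ennreal (P {1..N} (\<lambda>j. j) * ln (t / R)) + Q {1..N} t" using IH' tm by (intro add_left_mono) simp
      also have "\<dots> \<le> Q {1..N} R" by (rule gr)
      finally show ?thesis .
    qed
  qed
  then show ?thesis unfolding Q0 SS_def by simp
qed

end
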